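(* Let $a>c$, let $\mathbf V'\subset\mathbf V$ be nonempty, and let $g:\mathbf V'\to\mathbb R$ satisfy $g(x)-g(y)\le S_a(y,x)$ for all $x,y\in\mathbf V'$. Then the function $$v(x)=\begin{cases}g(x), & x\in\mathbf V',\\ \min\{g(y)+S_a(y,x):y\in\mathbf V'\}, & x\notin\mathbf V',\end{cases}$$ is the unique function on $\mathbf V$ that solves $(DFE_a)$ at every $x\in\mathbf V\setminus\mathbf V'$ and agrees with $g$ on $\mathbf V'$; moreover $v$ is a subsolution of $(DFE_a)$ on all of $\mathbf V$.
   Context: Network $\Gamma$ (finite arcs $\mathcal E$ closed under inversion, vertices $\mathbf V$, connected), Hamiltonians $H_\gamma$ continuous, coercive, quasiconvex with $\mathrm{Int}\{H_\gamma(s,\cdot)\le b\}=\{H_\gamma(s,\cdot)<b\}$, $H_{\tilde\gamma}(s,p)=H_\gamma(1-s,-p)$; $a_0$ = max of $\max_s\min_pH_\gamma$ over non-closed arcs and of $c_\gamma$ (least level admitting a periodic viscosity subsolution) over closed arcs, with $\min_pH_\gamma(s,p)$ constant in $s$ whenever $\max_s\min_pH_\gamma=a_0$. Graph $\mathbf X=(\mathbf V,\mathbf E)$, bijection $\Psi:\mathbf E\to\mathcal E$, $\mathrm o(e)=\Psi(e)(0)$, $\mathrm t(e)=\Psi(e)(1)$, $-e=\Psi^{-1}(\widetilde{\Psi(e)})$, $\mathbf E_x=\{e:\mathrm o(e)=x\}$, $\sigma_a(e)=\int_0^1\max\{p:H_{\Psi(e)}(t,p)=a\}dt$. Paths $\xi=(e_1,\dots,e_M)$,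 $M\ge1$, $\mathrm t(e_j)=\mathrm o(e_{j+1})$; $\sigma_a(\xi)=\sum\sigma_a(e_i)$; $S_a(x,y)=\inf\{\sigma_a(\xi):\xi$ path from $x$ to $y\}$. $(DFE_a)$ at $x$: $u(x)=\min_{e\in\mathbf E_x}(u(\mathrm t(e))+\sigma_a(-e))$; subsolution: $u(\mathrm t(e))-u(\mathrm o(e))\le\sigma_a(e)$ $\forall e$. $c=\min\{a\ge a_0:(DFE_a)$ has a subsolution$\}$. *)

theory Defs
  imports "HOL-Analysis.Analysis"
begin

text \<open>The network is represented by its combinatorial graph:
  vertices V, arcs E (one graph edge per arc of the network), origin map src,
  terminal map tgt, arc inversion inv_e, and the Hamiltonian H e attached to the arc
  Psi(e), as a function of (s,p) in [0,1] x R.\<close>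

definition graph_ok ::
  "'v set \<Rightarrow> 'e set \<Rightarrow> ('e \<Rightarrow> 'v) \<Rightarrow> ('e \<Rightarrow> 'v) \<Rightarrow> ('e \<Rightarrow> 'e) \<Rightarrow> bool" where
  "graph_ok V E src tgt inv_e \<longleftrightarrow>
     finite E \<and> E \<noteq> {} \<and> V = src ` E \<and>
     (\<forall>e\<in>E. tgt e \<in> V \<and> inv_e e \<in> E \<and> inv_e e \<noteq> e \<and> inv_e (inv_e e) = e \<and>
              src (inv_e e) = tgt e \<and> tgt (inv_e e) = src e)"

definition is_path ::
  "'e set \<Rightarrow> ('e \<Rightarrow> 'v) \<Rightarrow> ('e \<Rightarrow> 'v) \<Rightarrow> 'e list \<Rightarrow> bool" where
  "is_path E src tgt xi \<longleftrightarrow> xi \<noteq> [] \<and> set xi \<subseteq> E \<and>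
     (\<forall>j. Suc j < length xi \<longrightarrow> tgt (xi ! j) = src (xi ! Suc j))"

definition path_from_to ::
  "'e set \<Rightarrow> ('e \<Rightarrow> 'v) \<Rightarrow> ('e \<Rightarrow> 'v) \<Rightarrow> 'v \<Rightarrow> 'v \<Rightarrow> 'e list \<Rightarrow> bool" where
  "path_from_to E src tgt x y xi \<longleftrightarrow>
     is_path E src tgt xi \<and> src (hd xi) = x \<and> tgt (last xi) = y"

definition connected_graph ::
  "'v set \<Rightarrow> 'e set \<Rightarrow> ('e \<Rightarrow> 'v) \<Rightarrow> ('e \<Rightarrow> 'v) \<Rightarrow> bool" where
  "connected_graph V E src tgt \<longleftrightarrow>
     (\<forall>x\<in>V. \<forall>y\<in>V. x \<noteq> y \<longrightarrow> (\<exists>xi. path_from_to E src tgt x y xi))"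

definition hamiltonian_ok :: "(real \<Rightarrow> real \<Rightarrow> real) \<Rightarrow> bool" where
  "hamiltonian_ok h \<longleftrightarrow>
     continuous_on ({0..1} \<times> UNIV) (\<lambda>(s,p). h s p) \<and>
     (\<forall>M. \<exists>R. \<forall>s\<in>{0..1}. \<forall>p. \<bar>p\<bar> \<ge> R \<longrightarrow> h s p \<ge> M) \<and>
     (\<forall>s\<in>{0..1}. \<forall>b. convex {p. h s p \<le> b}) \<and>
     (\<forall>s\<in>{0..1}. \<forall>b. interior {p. h s p \<le> b} = {p. h s p < b})"

definition minH :: "(real \<Rightarrow> real \<Rightarrow> real) \<Rightarrow> real \<Rightarrow> real" where
  "minH h s = Inf (range (h s))"

definition maxminH :: "(real \<Rightarrow> real \<Rightarrow> real) \<Rightarrow> real" where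
  "maxminH h = Sup (minH h ` {0..1})"

definition visc_subsol :: "(real \<Rightarrow> real \<Rightarrow> real) \<Rightarrow> real \<Rightarrow> (real \<Rightarrow> real) \<Rightarrow> bool" where
  "visc_subsol F b u \<longleftrightarrow> continuous_on UNIV u \<and>
     (\<forall>s d \<phi>. (\<phi> has_real_derivative d) (at s) \<and>
        (\<exists>\<delta>>0. \<forall>r. \<bar>r - s\<bar> < \<delta> \<longrightarrow> u r - \<phi> r \<le> u s - \<phi> s) \<longrightarrow> F s d \<le> b)"

text \<open>Periodic viscosity subsolution for a closed arc: 1-periodic u on R, subsolution
  of the equation with the Hamiltonian extended 1-periodically in s.\<close>
definition periodic_subsol :: "(real \<Rightarrow> real \<Rightarrow> real) \<Rightarrow> real \<Rightarrow> (real \<Rightarrow> real) \<Rightarrow> bool" where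
  "periodic_subsol h b u \<longleftrightarrow> (\<forall>s. u (s + 1) = u s) \<and>
     visc_subsol (\<lambda>s p. h (frac s) p) b u"

definition c_arc :: "(real \<Rightarrow> real \<Rightarrow> real) \<Rightarrow> real" where
  "c_arc h = Inf {b. \<exists>u. periodic_subsol h b u}"

definition a0 :: "'e set \<Rightarrow> ('e \<Rightarrow> 'v) \<Rightarrow> ('e \<Rightarrow> 'v) \<Rightarrow> ('e \<Rightarrow> real \<Rightarrow> real \<Rightarrow> real) \<Rightarrow> real" where
  "a0 E src tgt H = Max ((\<lambda>e. maxminH (H e)) ` {e\<in>E. src e \<noteq> tgt e} \<union>
                         (\<lambda>e. c_arc (H e)) ` {e\<in>E. src e = tgt e})"

definition network_ok ::
  "'v set \<Rightarrow> 'e set \<Rightarrow> ('e \<Rightarrow> 'v) \<Rightarrow> ('e \<Rightarrow> 'v) \<Rightarrow> ('e \<Rightarrow> 'e) \<Rightarrow>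
   ('e \<Rightarrow> real \<Rightarrow> real \<Rightarrow> real) \<Rightarrow> bool" where
  "network_ok V E src tgt inv_e H \<longleftrightarrow>
     graph_ok V E src tgt inv_e \<and> connected_graph V E src tgt \<and>
     (\<forall>e\<in>E. hamiltonian_ok (H e)) \<and>
     (\<forall>e\<in>E. \<forall>s\<in>{0..1}. \<forall>p. H (inv_e e) s p = H e (1 - s) (- p)) \<and>
     (\<forall>e\<in>E. maxminH (H e) = a0 E src tgt H \<longrightarrow>
        (\<forall>s\<in>{0..1}. minH (H e) s = a0 E src tgt H))"

definition sigma :: "('e \<Rightarrow> real \<Rightarrow> real \<Rightarrow> real) \<Rightarrow> real \<Rightarrow> 'e \<Rightarrow> real" where
  "sigma H a e = integral {0..1} (\<lambda>t. Sup {p. H e t p = a})"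

definition sigma_path :: "('e \<Rightarrow> real \<Rightarrow> real \<Rightarrow> real) \<Rightarrow> real \<Rightarrow> 'e list \<Rightarrow> real" where
  "sigma_path H a xi = (\<Sum>e\<leftarrow>xi. sigma H a e)"

definition S_a ::
  "'e set \<Rightarrow> ('e \<Rightarrow> 'v) \<Rightarrow> ('e \<Rightarrow> 'v) \<Rightarrow> ('e \<Rightarrow> real \<Rightarrow> real \<Rightarrow> real) \<Rightarrow> real \<Rightarrow> 'v \<Rightarrow> 'v \<Rightarrow> real" where
  "S_a E src tgt H a x y = Inf (sigma_path H a ` {xi. path_from_to E src tgt x y xi})"

definition DFE_at ::
  "'e set \<Rightarrow> ('e \<Rightarrow> 'v) \<Rightarrow> ('e \<Rightarrow> 'v) \<Rightarrow> ('e \<Rightarrow> 'e) \<Rightarrow> ('e \<Rightarrow> real \<Rightarrow> real \<Rightarrow> real) \<Rightarrow>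
   real \<Rightarrow> ('v \<Rightarrow> real) \<Rightarrow> 'v \<Rightarrow> bool" where
  "DFE_at E src tgt inv_e H a u x \<longleftrightarrow>
     u x = Min ((\<lambda>e. u (tgt e) + sigma H a (inv_e e)) ` {e\<in>E. src e = x})"

definition DFE_subsol ::
  "'e set \<Rightarrow> ('e \<Rightarrow> 'v) \<Rightarrow> ('e \<Rightarrow> 'v) \<Rightarrow> ('e \<Rightarrow> real \<Rightarrow> real \<Rightarrow> real) \<Rightarrow>
   real \<Rightarrow> ('v \<Rightarrow> real) \<Rightarrow> bool" where
  "DFE_subsol E src tgt H a u \<longleftrightarrow> (\<forall>e\<in>E. u (tgt e) - u (src e) \<le> sigma H a e)"

definition crit_c ::
  "'e set \<Rightarrow> ('e \<Rightarrow> 'v) \<Rightarrow> ('e \<Rightarrow> 'v) \<Rightarrow> ('e \<Rightarrow> real \<Rightarrow> real \<Rightarrow> real) \<Rightarrow> real" where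
  "crit_c E src tgt H =
     Inf {a. a \<ge> a0 E src tgt H \<and> (\<exists>u. DFE_subsol E src tgt H a u)}"

end

theory Submission
  imports Defs
begin


lemma ham_contp:
  assumes "hamiltonian_ok h" "t \<in> {0..1}"
  shows "continuous_on UNIV (h t)"
proof -
  have c: "continuous_on ({0..1} \<times> UNIV) (\<lambda>(s,p). h s p)" using assms(1) unfolding hamiltonian_ok_def by blast
  have "continuous_on UNIV (\<lambda>p. (\<lambda>(s,p). h s p) (t,p))"
    by (rule continuous_on_compose2[OF c]) (use assms(2) in \<open>auto intro!: continuous_intros\<close>)
  then show ?thesis by simp
qed

lemma ham_conts:
  assumes "hamiltonian_ok h"
  shows "continuous_on {0..1} (\<lambda>s. h s p)"
proof -
  have c: "continuous_on ({0..1} \<times> UNIV) (\<lambda>(s,p). h s p)" using assms(1) unfolding hamiltonian_ok_def by blast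
  have "continuous_on {0..1} (\<lambda>s. (\<lambda>(s,p). h s p) (s,p))"
    by (rule continuous_on_compose2[OF c]) (auto intro!: continuous_intros)
  then show ?thesis by simp
qed

lemma ham_contz:
  assumes "hamiltonian_ok h" "S \<subseteq> {0..1} \<times> UNIV"
  shows "continuous_on S (\<lambda>z. h (fst z) (snd z))"
proof -
  have c: "continuous_on ({0..1} \<times> UNIV) (\<lambda>(s,p). h s p)" using assms(1) unfolding hamiltonian_ok_def by blast
  have "continuous_on S (\<lambda>(s,p). h s p)" using continuous_on_subset[OF c assms(2)] .
  then show ?thesis by (simp add: case_prod_beta)
qed

lemma ham_coer:
  assumes "hamiltonian_ok h"
  obtains R where "R > 0" "\<And>s p. s \<in> {0..1} \<Longrightarrow> \<bar>p\<bar> \<ge> R \<Longrightarrow> h s p \<ge> M"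
proof -
  obtain R where R: "\<forall>s\<in>{0..1}. \<forall>p. \<bar>p\<bar> \<ge> R \<longrightarrow> h s p \<ge> M"
    using assms unfolding hamiltonian_ok_def by blast
  show ?thesis
    by (rule that[of "max R 1"]) (use R in auto)
qed

lemma ham_min:
  assumes h: "hamiltonian_ok h" and t: "t \<in> {0..1}"
  obtains q where "\<And>p. h t q \<le> h t p"
proof -
  obtain R where R: "R > 0" "\<And>s p. s \<in> {0..1} \<Longrightarrow> \<bar>p\<bar> \<ge> R \<Longrightarrow> h s p \<ge> h t 0"
    using ham_coer[OF h] by blast
  have "continuous_on {-R..R} (h t)"
    using ham_contp[OF h t] continuous_on_subset by blast
  then obtain q where q: "q \<in> {-R..R}" "\<forall>y\<in>{-R..R}. h t q \<le> h t y"
    using continuous_attains_inf[of "{-R..R}" "h t"] R(1) by auto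
  have "h t q \<le> h t p" for p
  proof (cases "\<bar>p\<bar> \<ge> R")
    case True
    then have "h t p \<ge> h t 0" using R(2) t by blast
    moreover have "h t q \<le> h t 0" using q R(1) by auto
    ultimately show ?thesis by linarith
  next
    case False then have "p \<in> {-R..R}" by auto
    then show ?thesis using q by blast
  qed
  then show ?thesis using that by blast
qed

lemma minH_eq:
  assumes "\<And>p. h t q \<le> h t p"
  shows "minH h t = h t q"
  unfolding minH_def by (rule cInf_eq_minimum) (use assms in auto)

definition Pm :: "(real \<Rightarrow> real \<Rightarrow> real) \<Rightarrow> real \<Rightarrow> real \<Rightarrow> real" where
  "Pm h b t = Sup {p. h t p = b}"

lemma Pm_props:
  assumes h: "hamiltonian_ok h" and t: "t \<in> {0..1}" and p0: "h t p0 \<le> b"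
  shows "h t (Pm h b t) = b" "\<And>p. h t p \<le> b \<Longrightarrow> p \<le> Pm h b t"
proof -
  obtain R where R: "R > 0" "\<And>s p. s \<in> {0..1} \<Longrightarrow> \<bar>p\<bar> \<ge> R \<Longrightarrow> h s p \<ge> b + 1"
    using ham_coer[OF h] by blast
  let ?L = "{p. h t p \<le> b}"
  have cont: "continuous_on UNIV (h t)" using ham_contp[OF h t] .
  have cl: "closed ?L" by (rule closed_Collect_le[OF cont]) (auto intro: continuous_intros)
  have Lsub: "p \<in> ?L \<Longrightarrow> \<bar>p\<bar> < R" for p using R(2)[OF t, of p] by force
  have bdd: "bdd_above ?L" unfolding bdd_above_def using Lsub by (meson abs_less_iff less_le_not_le)
  have ne: "?L \<noteq> {}" using p0 by auto
  define q where "q = Sup ?L"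
  have qL: "q \<in> ?L" unfolding q_def using closed_contains_Sup[OF ne bdd cl] .
  have qmax: "p \<in> ?L \<Longrightarrow> p \<le> q" for p unfolding q_def using cSup_upper[OF _ bdd] by blast
  have qb: "h t q = b"
  proof (rule ccontr)
    assume "h t q \<noteq> b"
    then have lt: "h t q < b" using qL by auto
    have qR: "q \<le> R" using Lsub[OF qL] by auto
    have "h t R \<ge> b + 1" using R(2)[OF t, of R] R(1) by auto
    then obtain x where x: "q \<le> x" "x \<le> R" "h t x = b"
      using IVT'[of "h t" q b R] lt qR continuous_on_subset[OF cont] by force
    then have "x \<le> q" using qmax by auto
    then show False using x lt by auto
  qed
  have eq: "Pm h b t = q" unfolding Pm_def
    by (rule cSup_eq_maximum) (use qb qmax in auto)
  show "h t (Pm h b t) = b" using eq qb by simp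
  show "\<And>p. h t p \<le> b \<Longrightarrow> p \<le> Pm h b t" using eq qmax by auto
qed




lemma avoid:
  assumes h: "hamiltonian_ok h" and I: "compact I" and t0: "t0 \<in> {0..1}"
    and nb: "\<forall>p\<in>I. b < h t0 p"
  shows "\<exists>d>0. \<forall>s\<in>{0..1}. dist s t0 < d \<longrightarrow> (\<forall>p\<in>I. b < h s p)"
proof -
  define K where "K = {z \<in> {0..1} \<times> I. h (fst z) (snd z) \<le> b}"
  have cS: "compact ({0..1::real} \<times> I)" using I by (simp add: compact_Times)
  have clK: "closed K" unfolding K_def
    by (rule continuous_on_closed_Collect_le)
       (auto intro!: ham_contz[OF h] continuous_intros compact_imp_closed[OF cS])
  have "compact K"
  proof -
    have "K = ({0..1} \<times> I) \<inter> K" unfolding K_def by auto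
    then show ?thesis using compact_Int_closed[OF cS clK] by simp
  qed
  then have "closed (fst ` K)"
    by (intro compact_imp_closed compact_continuous_image continuous_intros)
  moreover have "t0 \<notin> fst ` K"
  proof
    assume "t0 \<in> fst ` K"
    then obtain z where z: "z \<in> K" "fst z = t0" by blast
    then show False using nb unfolding K_def by auto
  qed
  ultimately obtain d where d: "d > 0" "ball t0 d \<subseteq> - fst ` K"
  proof -
    assume cl: "closed (fst ` K)" and tn: "t0 \<notin> fst ` K"
      and th: "\<And>d. 0 < d \<Longrightarrow> ball t0 d \<subseteq> - fst ` K \<Longrightarrow> thesis"
    have "open (- fst ` K)" using cl by (simp add: open_Compl)
    moreover have "t0 \<in> - fst ` K" using tn by simp
    ultimately show thesis using open_contains_ball th by blast
  qed
  show ?thesis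
  proof (intro exI[of _ d] conjI ballI impI d(1))
    fix s p assume s: "s \<in> {0..1}" "dist s t0 < d" and p: "p \<in> I"
    show "b < h s p"
    proof (rule ccontr)
      assume "\<not> b < h s p"
      then have "(s,p) \<in> K" using s p unfolding K_def by auto
      then have "s \<in> fst ` K" by (rule image_eqI[rotated]) simp
      moreover have "s \<in> ball t0 d" using s by (simp add: dist_commute)
      ultimately show False using d(2) by blast
    qed
  qed
qed

lemma Pm_cont:
  assumes h: "hamiltonian_ok h" and hyp: "\<forall>t\<in>{0..1}. \<exists>p. h t p \<le> b"
  shows "continuous_on {0..1} (Pm h b)"
  unfolding continuous_on_iff
proof (intro ballI allI impI)
  fix t0 :: real and e :: real
  assume t0: "t0 \<in> {0..1}" and e: "e > 0"
  obtain R where R: "R > 0" "\<And>s p. s \<in> {0..1} \<Longrightarrow> \<bar>p\<bar> \<ge> R \<Longrightarrow> h s p \<ge> b + 1"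
    using ham_coer[OF h] by blast
  have PmL: "h s (Pm h b s) = b" "\<And>p. h s p \<le> b \<Longrightarrow> p \<le> Pm h b s" if "s \<in> {0..1}" for s
    using Pm_props[OF h that] hyp that by blast+
  have Rb: "\<bar>p\<bar> < R" if "s \<in> {0..1}" "h s p \<le> b" for s p
    using R(2)[OF that(1), of p] that(2) by force
  define P0 where "P0 = Pm h b t0"
  have P0: "h t0 P0 = b" "\<And>p. h t0 p \<le> b \<Longrightarrow> p \<le> P0" using PmL[OF t0] unfolding P0_def by auto
  have "\<forall>p\<in>{P0+e..R}. b < h t0 p"
  proof
    fix p assume "p \<in> {P0+e..R}"
    then have "p > P0" using e by auto
    show "b < h t0 p"
    proof (rule ccontr)
      assume "\<not> b < h t0 p"
      then have "p \<le> P0" using P0(2)[of p] by simp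
      with \<open>p > P0\<close> show False by simp
    qed
  qed
  then obtain d1 where d1: "d1 > 0" "\<forall>s\<in>{0..1}. dist s t0 < d1 \<longrightarrow> (\<forall>p\<in>{P0+e..R}. b < h s p)"
    using avoid[OF h _ t0] by blast
  have "\<exists>d2>0. \<forall>s\<in>{0..1}. dist s t0 < d2 \<longrightarrow> P0 - e < Pm h b s"
  proof (cases "\<forall>p\<in>{-R..P0-e}. b < h t0 p")
    case True
    then obtain d2 where d2: "d2 > 0" "\<forall>s\<in>{0..1}. dist s t0 < d2 \<longrightarrow> (\<forall>p\<in>{-R..P0-e}. b < h s p)"
      using avoid[OF h _ t0] by blast
    show ?thesis
    proof (intro exI[of _ d2] conjI ballI impI d2(1))
      fix s assume s: "s \<in> {0..1}" "dist s t0 < d2"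
      have "\<bar>Pm h b s\<bar> < R" using Rb[OF s(1)] PmL(1)[OF s(1)] by simp
      moreover have "Pm h b s \<notin> {-R..P0-e}"
      proof
        assume "Pm h b s \<in> {-R..P0-e}"
        then have "b < h s (Pm h b s)" using d2(2) s by blast
        then show False using PmL(1)[OF s(1)] by simp
      qed
      ultimately show "P0 - e < Pm h b s" by auto
    qed
  next
    case False
    then obtain q where q: "q \<le> P0 - e" "h t0 q \<le> b" by force
    have cv: "convex {p. h t0 p \<le> b}" using h t0 unfolding hamiltonian_ok_def by blast
    have "is_interval {p. h t0 p \<le> b}" using cv is_interval_convex_1 by blast
    then have "{q<..<P0} \<subseteq> {p. h t0 p \<le> b}"
    proof -
      assume ii: "is_interval {p. h t0 p \<le> b}"
      show ?thesis
      proof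
        fix x assume "x \<in> {q<..<P0}"
        then have "q \<le> x" "x \<le> P0" by auto
        moreover have "q \<in> {p. h t0 p \<le> b}" "P0 \<in> {p. h t0 p \<le> b}" using q(2) P0(1) by auto
        ultimately show "x \<in> {p. h t0 p \<le> b}" using ii unfolding is_interval_1 by blast
      qed
    qed
    then have "{q<..<P0} \<subseteq> interior {p. h t0 p \<le> b}"
      by (rule interior_maximal) auto
    also have "\<dots> = {p. h t0 p < b}" using h t0 unfolding hamiltonian_ok_def by blast
    finally have sub: "{q<..<P0} \<subseteq> {p. h t0 p < b}" .
    have "P0 - e/2 \<in> {q<..<P0}" using q(1) e by auto
    with sub have m: "h t0 (P0 - e/2) < b" by blast
    have "continuous_on {0..1} (\<lambda>s. h s (P0 - e/2))" using ham_conts[OF h] .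
    then obtain d2 where d2: "d2 > 0" "\<forall>s\<in>{0..1}. dist s t0 < d2 \<longrightarrow> dist (h s (P0 - e/2)) (h t0 (P0 - e/2)) < b - h t0 (P0 - e/2)"
      using t0 m unfolding continuous_on_iff by (meson diff_gt_0_iff_gt)
    show ?thesis
    proof (intro exI[of _ d2] conjI ballI impI d2(1))
      fix s assume s: "s \<in> {0..1}" "dist s t0 < d2"
      then have "h s (P0 - e/2) < b" using d2(2) by (auto simp: dist_real_def)
      then have "P0 - e/2 \<le> Pm h b s" using PmL(2)[OF s(1)] by simp
      then show "P0 - e < Pm h b s" using e by simp
    qed
  qed
  then obtain d2 where d2: "d2 > 0" "\<forall>s\<in>{0..1}. dist s t0 < d2 \<longrightarrow> P0 - e < Pm h b s" by blast
  show "\<exists>d>0. \<forall>x'\<in>{0..1}. dist x' t0 < d \<longrightarrow> dist (Pm h b x') (Pm h b t0) < e"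
  proof (intro exI[of _ "min d1 d2"] conjI ballI impI)
    show "min d1 d2 > 0" using d1 d2 by simp
    fix s assume s: "s \<in> {0..1}" "dist s t0 < min d1 d2"
    have "\<bar>Pm h b s\<bar> < R" using Rb[OF s(1)] PmL(1)[OF s(1)] by simp
    moreover have "Pm h b s \<notin> {P0+e..R}"
    proof
      assume "Pm h b s \<in> {P0+e..R}"
      then have "b < h s (Pm h b s)" using d1(2) s by simp
      then show False using PmL(1)[OF s(1)] by simp
    qed
    ultimately have "Pm h b s < P0 + e" by auto
    moreover have "P0 - e < Pm h b s" using d2(2) s by auto
    ultimately show "dist (Pm h b s) (Pm h b t0) < e" unfolding P0_def dist_real_def by auto
  qed
qed

lemma integral_strict:
  fixes f g :: "real \<Rightarrow> real"
  assumes f: "continuous_on {0..1} f" and g: "continuous_on {0..1} g"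
    and lt: "\<And>t. t \<in> {0..1} \<Longrightarrow> f t < g t"
  shows "integral {0..1} f < integral {0..1} g"
proof -
  have c: "continuous_on {0..1} (\<lambda>t. g t - f t)" using f g by (intro continuous_intros)
  obtain t1 where t1: "t1 \<in> {0..1}" "\<forall>t\<in>{0..1}. g t1 - f t1 \<le> g t - f t"
    using continuous_attains_inf[OF compact_Icc _ c] by auto
  define d where "d = g t1 - f t1"
  have d: "d > 0" using lt[OF t1(1)] unfolding d_def by simp
  have i1: "(\<lambda>t. d) integrable_on {0..1::real}" by (intro integrable_continuous_interval continuous_intros)
  have i2: "(\<lambda>t. g t - f t) integrable_on {0..1}" using c integrable_continuous_interval by blast
  have le3: "\<And>x. x \<in> {0..1} \<Longrightarrow> d \<le> g x - f x" using t1(2) unfolding d_def by blast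
  have "integral {0..1} (\<lambda>t::real. d) \<le> integral {0..1} (\<lambda>t. g t - f t)"
    using Henstock_Kurzweil_Integration.integral_le[OF i1 i2] le3 by blast
  also have "\<dots> = integral {0..1} g - integral {0..1} f"
    by (rule integral_diff) (use f g integrable_continuous_interval in auto)
  finally show ?thesis using d by simp
qed



lemma penal:
  assumes h: "hamiltonian_ok h" and ps: "periodic_subsol h b u"
    and t0: "0 < t0" "t0 < 1" and e: "e > 0"
  shows "\<exists>s. 0 < s \<and> s < 1 \<and> \<bar>s - t0\<bar> < e \<and> (\<exists>p. h s p \<le> b)"
proof -
  have vs: "visc_subsol (\<lambda>s p. h (frac s) p) b u" using ps unfolding periodic_subsol_def by blast
  have uc: "continuous_on UNIV u" using vs unfolding visc_subsol_def by blast
  have test: "\<And>s d \<phi>. (\<phi> has_real_derivative d) (at s) \<Longrightarrow>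
        (\<exists>\<delta>>0. \<forall>r. \<bar>r - s\<bar> < \<delta> \<longrightarrow> u r - \<phi> r \<le> u s - \<phi> s) \<Longrightarrow> h (frac s) d \<le> b"
    using vs unfolding visc_subsol_def by blast
  define I where "I = {t0 - 1 .. t0 + 1}"
  have "compact (u ` I)" unfolding I_def
    by (intro compact_continuous_image continuous_on_subset[OF uc]) auto
  then obtain M where M: "\<forall>x\<in>u ` I. norm x \<le> M" using compact_imp_bounded bounded_iff by metis
  have M': "\<And>r. r \<in> I \<Longrightarrow> \<bar>u r\<bar> \<le> M" using M by auto
  have M0: "M \<ge> 0" using M'[of t0] unfolding I_def by auto
  define dl where "dl = min (min e 1) (min t0 (1 - t0))"
  have dl: "dl > 0" "dl \<le> e" "dl \<le> 1" "dl \<le> t0" "dl \<le> 1 - t0" using e t0 unfolding dl_def by auto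
  define ep where "ep = dl^2 / (2*M + 1)"
  have ep: "ep > 0" unfolding ep_def using dl M0 by auto
  define f where "f = (\<lambda>r. u r - (r - t0)^2 / ep)"
  have fc: "continuous_on I f" unfolding f_def
    by (intro continuous_intros continuous_on_subset[OF uc]) (use ep in auto)
  obtain s where s: "s \<in> I" "\<forall>y\<in>I. f y \<le> f s"
    using continuous_attains_sup[OF _ _ fc] unfolding I_def by auto
  have "f t0 \<le> f s" using s(2) unfolding I_def by auto
  then have "(s - t0)^2 / ep \<le> u s - u t0" unfolding f_def by simp
  also have "\<dots> \<le> 2 * M" using M'[OF s(1)] M'[of t0] unfolding I_def by auto
  finally have "(s - t0)^2 \<le> 2 * M * ep" using ep by (simp add: divide_le_eq)
  also have "2 * M * ep < dl^2" unfolding ep_def using dl M0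
    by (simp add: field_simps)
  finally have "\<bar>s - t0\<bar>^2 < dl^2" by simp
  then have sd: "\<bar>s - t0\<bar> < dl" using dl(1) power2_less_imp_less by fastforce
  have s01: "0 < s" "s < 1" using sd dl by auto
  have der: "((\<lambda>r. (r - t0)^2 / ep) has_real_derivative (2 * (s - t0) / ep)) (at s)"
    using ep by (auto intro!: derivative_eq_intros)
  have loc: "\<exists>\<delta>>0. \<forall>r. \<bar>r - s\<bar> < \<delta> \<longrightarrow> u r - (r - t0)^2 / ep \<le> u s - (s - t0)^2 / ep"
  proof (intro exI[of _ "1 - \<bar>s - t0\<bar>"] conjI allI impI)
    show "0 < 1 - \<bar>s - t0\<bar>" using sd dl by auto
    fix r assume "\<bar>r - s\<bar> < 1 - \<bar>s - t0\<bar>"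
    then have "r \<in> I" unfolding I_def by auto
    then show "u r - (r - t0)^2 / ep \<le> u s - (s - t0)^2 / ep" using s(2) unfolding f_def by blast
  qed
  have "h (frac s) (2 * (s - t0) / ep) \<le> b" by (rule test[OF der loc])
  moreover have "frac s = s" using s01 by (simp add: frac_eq)
  ultimately show ?thesis using s01 sd dl by auto
qed

lemma c_arc_ge:
  assumes h: "hamiltonian_ok h" and ps: "periodic_subsol h b u" and t: "t \<in> {0..1}"
  shows "\<exists>p. h t p \<le> b"
proof -
  obtain R where R: "R > 0" "\<And>s p. s \<in> {0..1} \<Longrightarrow> \<bar>p\<bar> \<ge> R \<Longrightarrow> h s p \<ge> b + 1"
    using ham_coer[OF h] by blast
  define K where "K = {z \<in> {0..1} \<times> {-R..R}. h (fst z) (snd z) \<le> b}"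
  have cS: "compact ({0..1::real} \<times> {-R..R::real})" by (simp add: compact_Times)
  have clK: "closed K" unfolding K_def
    by (rule continuous_on_closed_Collect_le)
       (auto intro!: ham_contz[OF h] continuous_intros compact_imp_closed[OF cS])
  have "compact K"
  proof -
    have "K = ({0..1} \<times> {-R..R}) \<inter> K" unfolding K_def by auto
    then show ?thesis using compact_Int_closed[OF cS clK] by simp
  qed
  then have clF: "closed (fst ` K)"
    by (intro compact_imp_closed compact_continuous_image continuous_intros)
  have "{0<..<1} \<subseteq> fst ` K"
  proof
    fix t0 :: real assume "t0 \<in> {0<..<1}"
    then have t0: "0 < t0" "t0 < 1" by auto
    show "t0 \<in> fst ` K"
    proof -
     have "\<forall>e>0. \<exists>y\<in>fst ` K. dist y t0 < e"
     proof (intro allI impI)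
      fix e :: real assume "e > 0"
      then obtain s p where sp: "0 < s" "s < 1" "\<bar>s - t0\<bar> < e" "h s p \<le> b"
        using penal[OF h ps t0] by blast
      have "\<bar>p\<bar> < R" using R(2)[of s p] sp by force
      then have "(s, p) \<in> K" unfolding K_def using sp by auto
      then have "s \<in> fst ` K" by (rule image_eqI[rotated]) simp
      moreover have "dist s t0 < e" using sp by (simp add: dist_real_def)
      ultimately show "\<exists>y\<in>fst ` K. dist y t0 < e" by blast
     qed
     then show ?thesis using closed_approachable[OF clF] by blast
    qed
  qed
  then have "closure {0<..<1::real} \<subseteq> fst ` K" using clF closure_minimal by blast
  then have "t \<in> fst ` K" using t by (simp add: subset_iff)
  then show ?thesis unfolding K_def by auto
qed



lemma ham_bdd:
  assumes h: "hamiltonian_ok h"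
  obtains B where "\<And>s. s \<in> {0..1} \<Longrightarrow> h s p \<le> B"
proof -
  have "compact ((\<lambda>s. h s p) ` {0..1})"
    by (intro compact_continuous_image ham_conts[OF h]) auto
  then obtain B where "\<forall>x\<in>(\<lambda>s. h s p) ` {0..1}. norm x \<le> B" using compact_imp_bounded bounded_iff by metis
  then have "\<And>s. s \<in> {0..1} \<Longrightarrow> h s p \<le> B" by (auto dest!: bspec simp: abs_le_iff)
  then show ?thesis using that by blast
qed

lemma minH_le:
  assumes h: "hamiltonian_ok h" and t: "t \<in> {0..1}"
  shows "minH h t \<le> h t p"
proof -
  obtain q where q: "\<And>p. h t q \<le> h t p" using ham_min[OF h t] by blast
  show ?thesis using minH_eq[of h t q] q by simp
qed

lemma a0_ge:
  assumes net: "network_ok V E src tgt inv_e H" and e: "e \<in> E" and t: "t \<in> {0..1}"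
  shows "\<exists>p. H e t p \<le> a0 E src tgt H"
proof -
  have g: "graph_ok V E src tgt inv_e" and hs: "\<forall>e\<in>E. hamiltonian_ok (H e)"
    using net unfolding network_ok_def by auto
  have fin: "finite E" using g unfolding graph_ok_def by auto
  have h: "hamiltonian_ok (H e)" using hs e by blast
  obtain q where q: "\<And>p. H e t q \<le> H e t p" using ham_min[OF h t] by blast
  have mq: "minH (H e) t = H e t q" using minH_eq[of "H e" t q] q by simp
  let ?S = "(\<lambda>e. maxminH (H e)) ` {e\<in>E. src e \<noteq> tgt e} \<union>
                         (\<lambda>e. c_arc (H e)) ` {e\<in>E. src e = tgt e}"
  have finS: "finite ?S" using fin by auto
  have "minH (H e) t \<le> a0 E src tgt H"
  proof (cases "src e = tgt e")
    case False
    then have "maxminH (H e) \<in> ?S" using e by auto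
    then have 1: "maxminH (H e) \<le> a0 E src tgt H" unfolding a0_def using Max_ge[OF finS] by blast
    obtain B where B: "\<And>s. s \<in> {0..1} \<Longrightarrow> H e s 0 \<le> B" using ham_bdd[OF h] by blast
    have "bdd_above (minH (H e) ` {0..1})"
      unfolding bdd_above_def
    proof (intro exI ballI)
      fix x assume "x \<in> minH (H e) ` {0..1}"
      then obtain s where s: "s \<in> {0..1}" "x = minH (H e) s" by blast
      show "x \<le> B" using minH_le[OF h s(1), of 0] B[OF s(1)] s(2) by simp
    qed
    then have "minH (H e) t \<le> maxminH (H e)" unfolding maxminH_def using t by (simp add: cSup_upper)
    then show ?thesis using 1 by simp
  next
    case True
    then have "c_arc (H e) \<in> ?S" using e by auto
    then have 1: "c_arc (H e) \<le> a0 E src tgt H" unfolding a0_def using Max_ge[OF finS] by blast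
    obtain B where B: "\<And>s. s \<in> {0..1} \<Longrightarrow> H e s 0 \<le> B" using ham_bdd[OF h] by blast
    have "periodic_subsol (H e) B (\<lambda>_. 0)"
      unfolding periodic_subsol_def visc_subsol_def
    proof (intro conjI allI impI)
      show "continuous_on UNIV (\<lambda>_::real. 0::real)" by simp
      fix s d \<phi> assume a: "(\<phi> has_real_derivative d) (at s) \<and>
        (\<exists>\<delta>>0. \<forall>r. \<bar>r - s\<bar> < \<delta> \<longrightarrow> (0::real) - \<phi> r \<le> 0 - \<phi> s)"
      then obtain \<delta> where dl: "\<delta> > 0" "\<forall>r. \<bar>r - s\<bar> < \<delta> \<longrightarrow> 0 - \<phi> r \<le> 0 - \<phi> s" by blast
      have "\<forall>r. \<bar>s - r\<bar> < \<delta> \<longrightarrow> \<phi> s \<le> \<phi> r" using dl(2) by (simp add: abs_minus_commute)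
      then have "d = 0" using DERIV_local_min[of \<phi> d s \<delta>] a dl(1) by blast
      moreover have "frac s \<in> {0..1}" using frac_ge_0[of s] frac_lt_1[of s] by auto
      ultimately show "H e (frac s) d \<le> B" using B by simp
    qed simp
    then have ne: "{b. \<exists>u. periodic_subsol (H e) b u} \<noteq> {}" by blast
    have "minH (H e) t \<le> c_arc (H e)" unfolding c_arc_def
    proof (rule cInf_greatest[OF ne])
      fix b assume "b \<in> {b. \<exists>u. periodic_subsol (H e) b u}"
      then obtain u where "periodic_subsol (H e) b u" by blast
      then obtain p where "H e t p \<le> b" using c_arc_ge[OF h _ t] by blast
      then show "minH (H e) t \<le> b" using minH_le[OF h t, of p] by simp
    qed
    then show ?thesis using 1 by simp
  qed
  then show ?thesis using mq by auto
qed

lemma sigma_Pm: "sigma H a e = integral {0..1} (Pm (H e) a)"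
  unfolding sigma_def Pm_def by simp

lemma sigma_lt:
  assumes net: "network_ok V E src tgt inv_e H" and e: "e \<in> E"
    and a': "a0 E src tgt H \<le> a'" and lt: "a' < a"
  shows "sigma H a' e < sigma H a e"
proof -
  have h: "hamiltonian_ok (H e)" using net e unfolding network_ok_def by auto
  have hy': "\<forall>t\<in>{0..1}. \<exists>p. H e t p \<le> a'"
  proof
    fix t :: real assume "t \<in> {0..1}"
    then obtain p where "H e t p \<le> a0 E src tgt H" using a0_ge[OF net e] by blast
    then show "\<exists>p. H e t p \<le> a'" using a' by (intro exI[of _ p]) simp
  qed
  have hy: "\<forall>t\<in>{0..1}. \<exists>p. H e t p \<le> a" using hy' lt by (meson less_imp_le order_trans)
  show ?thesis unfolding sigma_Pm
  proof (rule integral_strict[OF Pm_cont[OF h hy'] Pm_cont[OF h hy]])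
    fix t :: real assume t: "t \<in> {0..1}"
    obtain p where p: "H e t p \<le> a'" using hy' t by blast
    have 1: "H e t (Pm (H e) a' t) = a'" using Pm_props(1)[OF h t p] .
    have "Pm (H e) a' t \<le> Pm (H e) a t" using Pm_props(2)[OF h t, of p a] p lt 1 by simp
    moreover have "Pm (H e) a' t \<noteq> Pm (H e) a t" using 1 Pm_props(1)[OF h t, of p a] p lt by auto
    ultimately show "Pm (H e) a' t < Pm (H e) a t" by simp
  qed
qed

lemma crit_exists:
  assumes net: "network_ok V E src tgt inv_e H" and a: "a > crit_c E src tgt H"
  shows "\<exists>a' u. a0 E src tgt H \<le> a' \<and> a' < a \<and> DFE_subsol E src tgt H a' u"
proof -
  have g: "graph_ok V E src tgt inv_e" and hs: "\<forall>e\<in>E. hamiltonian_ok (H e)"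
    using net unfolding network_ok_def by auto
  have fin: "finite E" using g unfolding graph_ok_def by auto
  have "\<forall>e\<in>E. \<exists>B. \<forall>s\<in>{0..1}. H e s 0 \<le> B"
    using ham_bdd hs by metis
  then obtain Bf where Bf: "\<forall>e\<in>E. \<forall>s\<in>{0..1}. H e s 0 \<le> Bf e" by metis
  define b where "b = max (a0 E src tgt H) (Max (insert 0 (Bf ` E)))"
  have Hb: "H e s 0 \<le> b" if "e \<in> E" "s \<in> {0..1}" for e s
  proof -
    have "Bf e \<le> Max (insert 0 (Bf ` E))" using fin that by auto
    then show ?thesis using Bf that unfolding b_def by force
  qed
  have "DFE_subsol E src tgt H b (\<lambda>_. 0)"
    unfolding DFE_subsol_def
  proof
    fix e assume e: "e \<in> E"
    have h: "hamiltonian_ok (H e)" using hs e by blast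
    have hy: "\<forall>t\<in>{0..1}. \<exists>p. H e t p \<le> b" using Hb e by blast
    have "0 \<le> integral {0..1} (Pm (H e) b)"
    proof (rule integral_nonneg)
      show "Pm (H e) b integrable_on {0..1}"
        using Pm_cont[OF h hy] integrable_continuous_interval by blast
      fix t :: real assume t: "t \<in> {0..1}"
      show "0 \<le> Pm (H e) b t" using Pm_props(2)[OF h t, of 0 b 0] Hb[OF e t] by simp
    qed
    then show "(0::real) - 0 \<le> sigma H b e" unfolding sigma_Pm by simp
  qed
  then have bA: "b \<in> {a. a \<ge> a0 E src tgt H \<and> (\<exists>u. DFE_subsol E src tgt H a u)}"
    unfolding b_def by auto
  then have ne: "{a. a \<ge> a0 E src tgt H \<and> (\<exists>u. DFE_subsol E src tgt H a u)} \<noteq> {}" by blast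
  obtain a' where "a' \<in> {a. a \<ge> a0 E src tgt H \<and> (\<exists>u. DFE_subsol E src tgt H a u)}" "a' < a"
    using cInf_lessD[OF ne] a unfolding crit_c_def by blast
  then show ?thesis by blast
qed



lemma is_path_Cons:
  "is_path E src tgt (e # xi) \<longleftrightarrow> e \<in> E \<and> (xi = [] \<or> (tgt e = src (hd xi) \<and> is_path E src tgt xi))"
proof (cases xi)
  case Nil then show ?thesis unfolding is_path_def by auto
next
  case (Cons f ys)
  have "(\<forall>j. Suc j < length (e # f # ys) \<longrightarrow> tgt ((e # f # ys) ! j) = src ((e # f # ys) ! Suc j))
     \<longleftrightarrow> tgt e = src f \<and> (\<forall>j. Suc j < length (f # ys) \<longrightarrow> tgt ((f # ys) ! j) = src ((f # ys) ! Suc j))"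
  proof
    assume a: "\<forall>j. Suc j < length (e # f # ys) \<longrightarrow> tgt ((e # f # ys) ! j) = src ((e # f # ys) ! Suc j)"
    have "tgt e = src f" using a[rule_format, of 0] by simp
    moreover have "\<forall>j. Suc j < length (f # ys) \<longrightarrow> tgt ((f # ys) ! j) = src ((f # ys) ! Suc j)"
    proof (intro allI impI)
      fix j assume "Suc j < length (f # ys)"
      then show "tgt ((f # ys) ! j) = src ((f # ys) ! Suc j)" using a[rule_format, of "Suc j"] by simp
    qed
    ultimately show "tgt e = src f \<and> (\<forall>j. Suc j < length (f # ys) \<longrightarrow> tgt ((f # ys) ! j) = src ((f # ys) ! Suc j))" by blast
  next
    assume a: "tgt e = src f \<and> (\<forall>j. Suc j < length (f # ys) \<longrightarrow> tgt ((f # ys) ! j) = src ((f # ys) ! Suc j))"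
    show "\<forall>j. Suc j < length (e # f # ys) \<longrightarrow> tgt ((e # f # ys) ! j) = src ((e # f # ys) ! Suc j)"
    proof (intro allI impI)
      fix j assume j: "Suc j < length (e # f # ys)"
      show "tgt ((e # f # ys) ! j) = src ((e # f # ys) ! Suc j)"
      proof (cases j)
        case 0 then show ?thesis using a by simp
      next
        case (Suc k) then show ?thesis using a j by auto
      qed
    qed
  qed
  then show ?thesis unfolding is_path_def using Cons by auto
qed

lemma ptt_Cons:
  "path_from_to E src tgt x y (e # xi) \<longleftrightarrow>
     e \<in> E \<and> src e = x \<and> ((xi = [] \<and> tgt e = y) \<or> path_from_to E src tgt (tgt e) y xi)"
  unfolding path_from_to_def is_path_Cons by (cases xi) (auto simp: is_path_def)

lemma ptt_Nil[simp]: "\<not> path_from_to E src tgt x y []"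
  by (simp add: path_from_to_def is_path_def)

lemma ptt_snoc:
  "path_from_to E src tgt x y (xi @ [f]) \<longleftrightarrow>
     f \<in> E \<and> tgt f = y \<and> ((xi = [] \<and> src f = x) \<or> path_from_to E src tgt x (src f) xi)"
proof (induction xi arbitrary: x)
  case Nil then show ?case by (auto simp add: ptt_Cons)
next
  case (Cons e xs)
  show ?case
    unfolding append_Cons ptt_Cons[of E src tgt x y e "xs @ [f]"] ptt_Cons[of E src tgt x "src f" e xs] Cons.IH
    by auto
qed

lemma telescope:
  assumes "DFE_subsol E src tgt H b u" "path_from_to E src tgt x y xi"
  shows "u y - u x \<le> sigma_path H b xi"
  using assms(2)
proof (induction xi arbitrary: x)
  case Nil then show ?case by (simp add: path_from_to_def is_path_def)
next
  case (Cons e xs)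
  have e: "e \<in> E" "src e = x" using Cons.prems by (auto simp: ptt_Cons)
  have se: "u (tgt e) - u x \<le> sigma H b e" using assms(1) e unfolding DFE_subsol_def by auto
  show ?case
  proof (cases "xs = [] \<and> tgt e = y")
    case True then show ?thesis using se by (simp add: sigma_path_def)
  next
    case False
    then have "path_from_to E src tgt (tgt e) y xs" using Cons.prems by (auto simp: ptt_Cons)
    then have "u y - u (tgt e) \<le> sigma_path H b xs" using Cons.IH by blast
    then show ?thesis using se by (simp add: sigma_path_def)
  qed
qed

lemma minprinc:
  fixes w z :: "'v \<Rightarrow> real"
  assumes fin: "finite V" and ne: "V \<noteq> {}"
    and desc: "\<forall>x\<in>V - V'. \<exists>y\<in>V. w y - z y < w x - z x"
  shows "\<exists>x0\<in>V'. \<forall>x\<in>V. w x0 - z x0 \<le> w x - z x"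
proof -
  let ?f = "\<lambda>x. w x - z x"
  have "Min (?f ` V) \<in> ?f ` V" using fin ne by simp
  then obtain x0 where x0: "x0 \<in> V" "?f x0 = Min (?f ` V)" by auto
  have mn: "\<forall>x\<in>V. ?f x0 \<le> ?f x" using x0 fin by simp
  have "x0 \<in> V'"
  proof (rule ccontr)
    assume "x0 \<notin> V'"
    then obtain y where "y \<in> V" "?f y < ?f x0" using desc x0(1) by blast
    then show False using mn by force
  qed
  then show ?thesis using mn by blast
qed

lemma my_limit0:
  fixes A c :: real
  assumes "\<And>l. 0 < l \<Longrightarrow> l \<le> 1 \<Longrightarrow> - (l * c) \<le> A" and "0 \<le> c"
  shows "0 \<le> A"
proof (rule ccontr)
  assume "\<not> 0 \<le> A"
  then have A: "A < 0" by simp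
  define l where "l = min 1 (- A / (c + 1))"
  have p: "- A / (c + 1) > 0" using A assms(2) by (intro divide_pos_pos) auto
  have l: "0 < l" "l \<le> 1" using p unfolding l_def by auto
  have "l * c \<le> (- A / (c + 1)) * c" unfolding l_def using assms(2) by (intro mult_right_mono) auto
  also have "\<dots> < - A"
    using A assms(2) by (simp add: field_simps)
  finally show False using assms(1)[OF l] by simp
qed



theorem theorem6p24:
  fixes V :: "'v set" and E :: "'e set" and src tgt :: "'e \<Rightarrow> 'v" and inv_e :: "'e \<Rightarrow> 'e"
    and H :: "'e \<Rightarrow> real \<Rightarrow> real \<Rightarrow> real" and a :: real
    and V' :: "'v set" and g :: "'v \<Rightarrow> real"
  assumes net: "network_ok V E src tgt inv_e H"
    and a_gt: "a > crit_c E src tgt H"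
    and V'_sub: "V' \<subseteq> V" and V'_ne: "V' \<noteq> {}"
    and g_comp: "\<forall>x\<in>V'. \<forall>y\<in>V'. g x - g y \<le> S_a E src tgt H a y x"
  defines "v \<equiv> (\<lambda>x. if x \<in> V' then g x
                     else Min ((\<lambda>y. g y + S_a E src tgt H a y x) ` V'))"
  shows "(\<forall>x\<in>V - V'. DFE_at E src tgt inv_e H a v x)
       \<and> (\<forall>x\<in>V'. v x = g x)
       \<and> (\<forall>w. (\<forall>x\<in>V - V'. DFE_at E src tgt inv_e H a w x) \<and> (\<forall>x\<in>V'. w x = g x)
              \<longrightarrow> (\<forall>x\<in>V. w x = v x))
       \<and> DFE_subsol E src tgt H a v"
proof -
  let ?S = "S_a E src tgt H a"
  let ?sg = "sigma H a"
  have gok: "graph_ok V E src tgt inv_e" and conn: "connected_graph V E src tgt"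
    using net unfolding network_ok_def by auto
  have finE: "finite E" and VE: "V = src ` E"
    and eprops: "\<And>e. e \<in> E \<Longrightarrow> tgt e \<in> V \<and> inv_e e \<in> E \<and> inv_e (inv_e e) = e \<and>
              src (inv_e e) = tgt e \<and> tgt (inv_e e) = src e"
    using gok unfolding graph_ok_def by auto
  have finV: "finite V" using finE VE by simp
  have finV': "finite V'" using finV V'_sub finite_subset by blast
  have srcV: "e \<in> E \<Longrightarrow> src e \<in> V" for e using VE by blast
  have tgtV: "e \<in> E \<Longrightarrow> tgt e \<in> V" for e using eprops by blast
  have Vne: "V \<noteq> {}" using V'_ne V'_sub by blast
  obtain a' u where a': "a0 E src tgt H \<le> a'" "a' < a" and usub': "DFE_subsol E src tgt H a' u"
    using crit_exists[OF net a_gt] by blast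
  have ustrict: "u (tgt e) - u (src e) < ?sg e" if "e \<in> E" for e
    using usub' that sigma_lt[OF net that a'] unfolding DFE_subsol_def by force
  have usub: "DFE_subsol E src tgt H a u"
    unfolding DFE_subsol_def using ustrict by (simp add: less_imp_le)
  define PS where "PS x y = sigma_path H a ` {xi. path_from_to E src tgt x y xi}" for x y
  have Sdef: "?S x y = Inf (PS x y)" for x y unfolding S_a_def PS_def by simp
  have PSne: "PS x y \<noteq> {}" if xyV: "x \<in> V" "y \<in> V" for x y
  proof (cases "x = y")
    case False
    then obtain xi where "path_from_to E src tgt x y xi" using conn xyV unfolding connected_graph_def by blast
    then show ?thesis unfolding PS_def by blast
  next
    case True
    obtain e where e: "e \<in> E" "src e = x" using xyV VE by blast
    have "path_from_to E src tgt x y [e, inv_e e]"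
      using e eprops[OF e(1)] True by (simp add: ptt_Cons)
    then show ?thesis unfolding PS_def by blast
  qed
  have PSbdd: "bdd_below (PS x y)" for x y
    unfolding PS_def bdd_below_def using telescope[OF usub] by blast
  have S_le: "?S x y \<le> sigma_path H a xi" if "path_from_to E src tgt x y xi" for x y xi
    unfolding Sdef using that PSbdd by (intro cInf_lower) (auto simp: PS_def)
  have S_ge: "c \<le> ?S x y" if "x \<in> V" "y \<in> V"
      "\<And>xi. path_from_to E src tgt x y xi \<Longrightarrow> c \<le> sigma_path H a xi" for x y c
    unfolding Sdef using that PSne[OF that(1,2)] by (intro cInf_greatest) (auto simp: PS_def)
  have S_edge: "?S (src e) (tgt e) \<le> ?sg e" if "e \<in> E" for e
    using S_le[of "src e" "tgt e" "[e]"] that by (simp add: ptt_Cons sigma_path_def)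
  have S_tri: "?S x (tgt e) \<le> ?S x (src e) + ?sg e" if "x \<in> V" "e \<in> E" for x e
  proof -
    have "?S x (tgt e) - ?sg e \<le> ?S x (src e)"
    proof (rule S_ge[OF that(1) srcV[OF that(2)]])
      fix xi assume "path_from_to E src tgt x (src e) xi"
      then have "path_from_to E src tgt x (tgt e) (xi @ [e])" using that(2) by (simp add: ptt_snoc)
      then have "?S x (tgt e) \<le> sigma_path H a (xi @ [e])" by (rule S_le)
      then show "?S x (tgt e) - ?sg e \<le> sigma_path H a xi" by (simp add: sigma_path_def)
    qed
    then show ?thesis by simp
  qed
  have vV': "v x = g x" if "x \<in> V'" for x using that unfolding v_def by simp
  have v_le: "v x \<le> g y + ?S y x" if "x \<in> V" "y \<in> V'" for x y
  proof (cases "x \<in> V'")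
    case True then show ?thesis using g_comp that vV' by force
  next
    case False
    then have "v x = Min ((\<lambda>y. g y + ?S y x) ` V')" unfolding v_def by simp
    then show ?thesis using finV' that(2) by simp
  qed
  have v_att: "\<exists>y\<in>V'. v x = g y + ?S y x" if "x \<notin> V'" for x
  proof -
    have "v x = Min ((\<lambda>y. g y + ?S y x) ` V')" unfolding v_def using that by simp
    moreover have "Min ((\<lambda>y. g y + ?S y x) ` V') \<in> (\<lambda>y. g y + ?S y x) ` V'"
      using finV' V'_ne by simp
    ultimately show ?thesis by auto
  qed
  have v_sub: "DFE_subsol E src tgt H a v"
    unfolding DFE_subsol_def
  proof
    fix e assume e: "e \<in> E"
    show "v (tgt e) - v (src e) \<le> ?sg e"
    proof (cases "src e \<in> V'")
      case True
      have "v (tgt e) \<le> g (src e) + ?S (src e) (tgt e)" using v_le[OF tgtV[OF e] True] .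
      then show ?thesis using S_edge[OF e] vV'[OF True] by simp
    next
      case False
      then obtain y where y: "y \<in> V'" "v (src e) = g y + ?S y (src e)" using v_att by blast
      have "v (tgt e) \<le> g y + ?S y (tgt e)" using v_le[OF tgtV[OF e] y(1)] .
      moreover have "?S y (tgt e) \<le> ?S y (src e) + ?sg e" using S_tri[OF _ e] y(1) V'_sub by blast
      ultimately show ?thesis using y(2) by simp
    qed
  qed
  have v_DFE: "DFE_at E src tgt inv_e H a v x" if x: "x \<in> V - V'" for x
  proof -
    let ?Ex = "{e\<in>E. src e = x}"
    let ?F = "(\<lambda>e. v (tgt e) + ?sg (inv_e e)) ` ?Ex"
    have finF: "finite ?F" using finE by simp
    have neF: "?F \<noteq> {}" using x VE by blast
    have 1: "v x \<le> Min ?F"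
    proof (rule Min.boundedI[OF finF neF])
      fix z assume "z \<in> ?F"
      then obtain e where e: "e \<in> E" "src e = x" "z = v (tgt e) + ?sg (inv_e e)" by blast
      have "v (tgt (inv_e e)) - v (src (inv_e e)) \<le> ?sg (inv_e e)"
        using v_sub eprops[OF e(1)] unfolding DFE_subsol_def by blast
      then show "v x \<le> z" using eprops[OF e(1)] e by simp
    qed
    obtain y where y: "y \<in> V'" "v x = g y + ?S y x" using v_att x by blast
    have "Min ?F - g y \<le> ?S y x"
    proof (rule S_ge)
      show "y \<in> V" using y V'_sub by blast
      show "x \<in> V" using x by blast
      fix xi assume xi: "path_from_to E src tgt y x xi"
      then have "xi \<noteq> []" by auto
      then obtain ys f where ys: "xi = ys @ [f]" by (metis rev_exhaust)
      then have f: "f \<in> E" "tgt f = x" and alt: "(ys = [] \<and> src f = y) \<or> path_from_to E src tgt y (src f) ys"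
        using xi by (auto simp: ptt_snoc)
      have vsf: "v (src f) \<le> g y + sigma_path H a ys"
        using alt
      proof
        assume "ys = [] \<and> src f = y"
        then show ?thesis using vV'[OF y(1)] by (simp add: sigma_path_def)
      next
        assume p: "path_from_to E src tgt y (src f) ys"
        have "v (src f) \<le> g y + ?S y (src f)" using v_le[OF srcV[OF f(1)] y(1)] .
        also have "\<dots> \<le> g y + sigma_path H a ys" using S_le[OF p] by simp
        finally show ?thesis .
      qed
      have "inv_e f \<in> ?Ex" using eprops[OF f(1)] f by simp
      then have "v (tgt (inv_e f)) + ?sg (inv_e (inv_e f)) \<in> ?F" by blast
      then have "Min ?F \<le> v (src f) + ?sg f" using eprops[OF f(1)] finF by simp
      also have "\<dots> \<le> g y + sigma_path H a xi" using vsf ys by (simp add: sigma_path_def)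
      finally show "Min ?F - g y \<le> sigma_path H a xi" by simp
    qed
    then have "Min ?F \<le> v x" using y by simp
    then show ?thesis unfolding DFE_at_def using 1 by simp
  qed
  define K where "K = Max (insert 0 ((\<lambda>y. \<bar>g y - u y\<bar>) ` V'))"
  have K: "\<bar>g y - u y\<bar> \<le> K" if "y \<in> V'" for y unfolding K_def using finV' that by simp
  have K0: "0 \<le> K" unfolding K_def using finV' by simp
  have uniq: "w x = v x" if hw1: "\<forall>x\<in>V - V'. DFE_at E src tgt inv_e H a w x"
      and hw2: "\<forall>x\<in>V'. w x = g x" and x: "x \<in> V" for w x
  proof -
    have wmin: "\<exists>e\<in>E. src e = x1 \<and> w x1 = w (tgt e) + ?sg (inv_e e)" if "x1 \<in> V - V'" for x1
    proof -
      let ?F = "(\<lambda>e. w (tgt e) + ?sg (inv_e e)) ` {e\<in>E. src e = x1}"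
      have "w x1 = Min ?F" using hw1 that unfolding DFE_at_def by blast
      moreover have "Min ?F \<in> ?F" using finE that VE by (intro Min_in) auto
      ultimately show ?thesis by auto
    qed
    have wle: "w x1 \<le> w (tgt e) + ?sg (inv_e e)" if "x1 \<in> V - V'" "e \<in> E" "src e = x1" for x1 e
    proof -
      let ?F = "(\<lambda>e. w (tgt e) + ?sg (inv_e e)) ` {e\<in>E. src e = x1}"
      have "w x1 = Min ?F" using hw1 that unfolding DFE_at_def by blast
      moreover have "Min ?F \<le> w (tgt e) + ?sg (inv_e e)" using finE that by (intro Min_le) auto
      ultimately show ?thesis by simp
    qed
    have vmin: "\<exists>e\<in>E. src e = x1 \<and> v x1 = v (tgt e) + ?sg (inv_e e)" if "x1 \<in> V - V'" for x1
    proof -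
      let ?F = "(\<lambda>e. v (tgt e) + ?sg (inv_e e)) ` {e\<in>E. src e = x1}"
      have "v x1 = Min ?F" using v_DFE that unfolding DFE_at_def by blast
      moreover have "Min ?F \<in> ?F" using finE that VE by (intro Min_in) auto
      ultimately show ?thesis by auto
    qed
    have uinv: "u x1 - u (tgt e) < ?sg (inv_e e)" if "e \<in> E" "src e = x1" for e x1
      using ustrict[of "inv_e e"] eprops[OF that(1)] that by simp
    have vinv: "v x1 - v (tgt e) \<le> ?sg (inv_e e)" if "e \<in> E" "src e = x1" for e x1
      using v_sub eprops[OF that(1)] that unfolding DFE_subsol_def by force
    have ge: "0 \<le> w x - v x"
    proof (rule my_limit0[where c="\<bar>u x - v x\<bar> + K"])
      fix l :: real assume l: "0 < l" "l \<le> 1"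
      define z where "z y = (1 - l) * v y + l * u y" for y
      have desc: "\<forall>x1\<in>V - V'. \<exists>y\<in>V. w y - z y < w x1 - z x1"
      proof
        fix x1 assume x1: "x1 \<in> V - V'"
        obtain e where e: "e \<in> E" "src e = x1" "w x1 = w (tgt e) + ?sg (inv_e e)" using wmin[OF x1] by blast
        have A: "v x1 - v (tgt e) \<le> ?sg (inv_e e)" using vinv[OF e(1,2)] .
        have B: "u x1 - u (tgt e) < ?sg (inv_e e)" using uinv[OF e(1,2)] .
        have "(1 - l) * (v x1 - v (tgt e)) \<le> (1 - l) * ?sg (inv_e e)"
          using A l by (intro mult_left_mono) auto
        moreover have "l * (u x1 - u (tgt e)) < l * ?sg (inv_e e)" using B l by simp
        ultimately have "z x1 - z (tgt e) < ?sg (inv_e e)" unfolding z_def by (simp add: algebra_simps)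
        then show "\<exists>y\<in>V. w y - z y < w x1 - z x1" using e tgtV[OF e(1)] by (intro bexI[of _ "tgt e"]) auto
      qed
      obtain x0 where x0: "x0 \<in> V'" "\<forall>y\<in>V. w x0 - z x0 \<le> w y - z y"
        using minprinc[OF finV Vne desc] by blast
      have "w x0 - z x0 = l * (g x0 - u x0)" using hw2 x0(1) vV'[OF x0(1)] unfolding z_def
        by (simp add: algebra_simps)
      moreover have "- K \<le> g x0 - u x0" using K[OF x0(1)] by simp
      ultimately have "l * (- K) \<le> w x0 - z x0" using l mult_left_mono[of "- K" "g x0 - u x0" l] by simp
      then have "- (l * K) \<le> w x - z x" using x0(2) x by force
      moreover have "- (l * \<bar>u x - v x\<bar>) \<le> l * (u x - v x)" using l
        by (smt (verit, best) abs_ge_minus_self mult_left_mono mult_minus_right)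
      ultimately show "- (l * (\<bar>u x - v x\<bar> + K)) \<le> w x - v x" unfolding z_def
        by (simp add: algebra_simps)
    qed (use K0 in simp)
    have le: "0 \<le> v x - w x"
    proof (rule my_limit0[where c="\<bar>v x - u x\<bar> + K"])
      fix l :: real assume l: "0 < l" "l \<le> 1"
      define z where "z y = (1 + l) * v y - l * u y" for y
      have desc: "\<forall>x1\<in>V - V'. \<exists>y\<in>V. (- w y) - (- z y) < (- w x1) - (- z x1)"
      proof
        fix x1 assume x1: "x1 \<in> V - V'"
        obtain e where e: "e \<in> E" "src e = x1" "v x1 = v (tgt e) + ?sg (inv_e e)" using vmin[OF x1] by blast
        have W: "w x1 \<le> w (tgt e) + ?sg (inv_e e)" using wle[OF x1 e(1,2)] .
        have B: "u x1 - u (tgt e) < ?sg (inv_e e)" using uinv[OF e(1,2)] .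
        have "l * (u x1 - u (tgt e)) < l * ?sg (inv_e e)" using B l by simp
        then have "z x1 - z (tgt e) > ?sg (inv_e e)" unfolding z_def using e(3) by (simp add: algebra_simps)
        then show "\<exists>y\<in>V. (- w y) - (- z y) < (- w x1) - (- z x1)"
          using e tgtV[OF e(1)] W by (intro bexI[of _ "tgt e"]) auto
      qed
      obtain x0 where x0: "x0 \<in> V'" "\<forall>y\<in>V. (- w x0) - (- z x0) \<le> (- w y) - (- z y)"
        using minprinc[OF finV Vne desc] by blast
      have "w x0 - z x0 = l * (u x0 - g x0)" using hw2 x0(1) vV'[OF x0(1)] unfolding z_def
        by (simp add: algebra_simps)
      moreover have "u x0 - g x0 \<le> K" using K[OF x0(1)] by simp
      ultimately have "w x0 - z x0 \<le> l * K" using l mult_left_mono[of "u x0 - g x0" K l] by simp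
      then have "w x - z x \<le> l * K" using x0(2) x by force
      moreover have "l * (v x - u x) \<le> l * \<bar>v x - u x\<bar>" using l
        by (intro mult_left_mono) auto
      ultimately show "- (l * (\<bar>v x - u x\<bar> + K)) \<le> v x - w x" unfolding z_def
        by (simp add: algebra_simps)
    qed (use K0 in simp)
    show ?thesis using ge le by simp
  qed
  show ?thesis using v_DFE vV' uniq v_sub by blast
qed

end
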